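(* Let $m\ge 2$ and let $C_{4m}=v_0v_1\cdots v_{4m-1}v_0$. Let $\mathscr A$ be any partition of $\{v_i: i \text{ even}\}$ into blocks of size $2$ and $\mathscr B$ any partition of $\{v_i : i\text{ odd}\}$ into blocks of size $2$. Let $G_{2m}(\mathscr A,\mathscr B)$ be the (not necessarily simple) $4$-regular graph obtained from $C_{4m}$ by identifying the two vertices of each block of $\mathscr A\cup\mathscr B$ into a single vertex. Then $\chi_{la}(G_{2m}(\mathscr A,\mathscr B))=3$.
   Context: Identifying a set of pairwise nonadjacent vertices means replacing them by one new vertex incident to all edges previously incident to any of them (parallel edges may arise). For a connected (multi)graph $G$ with edge set $E$, $|E|=q$, a local antimagic labeling is a bijection $f:E\to\{1,\dots,q\}$ such that adjacent vertices $x,y$ satisfy $f^+(x)\ne f^+(y)$, where $f^+(x)$ is the sum of the labels of the edges incident to $x$; $\chi_{la}(G)$ is the minimum number of distinct values of $f^+$ over all local antimagic labelings of $G$. *)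

theory Defs
  imports Main "HOL-Library.Disjoint_Sets"
begin

text \<open>A finite multigraph is given by a vertex set V, an edge set E and an
  endpoint map ends; parallel edges are distinct elements of E with the same ends.\<close>

definition vsum :: "'e set \<Rightarrow> ('e \<Rightarrow> 'v \<times> 'v) \<Rightarrow> ('e \<Rightarrow> nat) \<Rightarrow> 'v \<Rightarrow> nat" where
  "vsum E ends f x =
     (\<Sum>e\<in>E. (if fst (ends e) = x then f e else 0) + (if snd (ends e) = x then f e else 0))"

definition adjacent :: "'e set \<Rightarrow> ('e \<Rightarrow> 'v \<times> 'v) \<Rightarrow> 'v \<Rightarrow> 'v \<Rightarrow> bool" where
  "adjacent E ends x y \<longleftrightarrow> x \<noteq> y \<and> (\<exists>e\<in>E. ends e = (x, y) \<or> ends e = (y, x))"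

definition local_antimagic ::
  "'v set \<Rightarrow> 'e set \<Rightarrow> ('e \<Rightarrow> 'v \<times> 'v) \<Rightarrow> ('e \<Rightarrow> nat) \<Rightarrow> bool" where
  "local_antimagic V E ends f \<longleftrightarrow>
     bij_betw f E {1..card E} \<and>
     (\<forall>x\<in>V. \<forall>y\<in>V. adjacent E ends x y \<longrightarrow> vsum E ends f x \<noteq> vsum E ends f y)"

definition chi_la :: "'v set \<Rightarrow> 'e set \<Rightarrow> ('e \<Rightarrow> 'v \<times> 'v) \<Rightarrow> nat" where
  "chi_la V E ends =
     (LEAST k. \<exists>f. local_antimagic V E ends f \<and> card (vsum E ends f ` V) = k)"

definition pair_partition :: "nat set set \<Rightarrow> nat set \<Rightarrow> bool" where
  "pair_partition P S \<longleftrightarrow> partition_on S P \<and> (\<forall>X\<in>P. card X = 2)"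

definition blk :: "nat set set \<Rightarrow> nat \<Rightarrow> nat set" where
  "blk P i = (THE X. X \<in> P \<and> i \<in> X)"

text \<open>G_{2m}(A,B): cycle C_{4m} with vertices v_0..v_{4m-1} (indices), edge i joins
  v_i and v_{(i+1) mod 4m}; vertices in a common block of A \<union> B are identified,
  so the vertex set is A \<union> B and edge i joins the blocks of i and (i+1) mod 4m.\<close>
definition G_verts :: "nat set set \<Rightarrow> nat set set \<Rightarrow> nat set set" where
  "G_verts A B = A \<union> B"

definition G_edges :: "nat \<Rightarrow> nat set" where
  "G_edges m = {0..<4*m}"

definition G_ends :: "nat \<Rightarrow> nat set set \<Rightarrow> nat set set \<Rightarrow> nat \<Rightarrow> nat set \<times> nat set" where
  "G_ends m A B i = (blk (A \<union> B) i, blk (A \<union> B) ((i + 1) mod (4*m)))"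

end

theory Submission
  imports Defs
begin

locale G9 =
  fixes m :: nat and A B :: "nat set set"
  assumes m2: "m \<ge> 2"
    and pA: "pair_partition A {i. i < 4*m \<and> even i}"
    and pB: "pair_partition B {i. i < 4*m \<and> odd i}"
begin

definition Ev where "Ev = {i. i < 4*m \<and> even i}"
definition Od where "Od = {i. i < 4*m \<and> odd i}"
definition pr :: "nat \<Rightarrow> nat" where "pr t = (if t = 0 then 4*m - 1 else t - 1)"
definition sc :: "nat \<Rightarrow> nat" where "sc e = (e + 1) mod (4*m)"

lemma partA: "partition_on Ev A" and cardA2: "X \<in> A \<Longrightarrow> card X = 2"
  using pA unfolding pair_partition_def Ev_def by auto
lemma partB: "partition_on Od B" and cardB2: "X \<in> B \<Longrightarrow> card X = 2"
  using pB unfolding pair_partition_def Od_def by auto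

lemma A_sub: "X \<in> A \<Longrightarrow> X \<subseteq> Ev" using partition_onD1[OF partA] by auto
lemma B_sub: "X \<in> B \<Longrightarrow> X \<subseteq> Od" using partition_onD1[OF partB] by auto
lemma A_ne: "X \<in> A \<Longrightarrow> X \<noteq> {}" using partition_onD3[OF partA] by auto
lemma B_ne: "X \<in> B \<Longrightarrow> X \<noteq> {}" using partition_onD3[OF partB] by auto
lemma A_disj: "X \<in> A \<Longrightarrow> Y \<in> A \<Longrightarrow> i \<in> X \<Longrightarrow> i \<in> Y \<Longrightarrow> X = Y"
  using disjointD[OF partition_onD2[OF partA]] by blast
lemma B_disj: "X \<in> B \<Longrightarrow> Y \<in> B \<Longrightarrow> i \<in> X \<Longrightarrow> i \<in> Y \<Longrightarrow> X = Y"
  using disjointD[OF partition_onD2[OF partB]] by blast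
lemma A_cov: "i \<in> Ev \<Longrightarrow> \<exists>X\<in>A. i \<in> X" using partition_onD1[OF partA] by auto
lemma B_cov: "i \<in> Od \<Longrightarrow> \<exists>X\<in>B. i \<in> X" using partition_onD1[OF partB] by auto

lemma finEv: "finite Ev" unfolding Ev_def by auto
lemma finOd: "finite Od" unfolding Od_def by auto
lemma finA: "finite A" using finite_elements[OF finEv partA] .
lemma finB: "finite B" using finite_elements[OF finOd partB] .

lemma in_A_even: "X \<in> A \<Longrightarrow> i \<in> X \<Longrightarrow> even i \<and> i < 4*m" using A_sub Ev_def by auto
lemma in_B_odd: "X \<in> B \<Longrightarrow> i \<in> X \<Longrightarrow> odd i \<and> i < 4*m" using B_sub Od_def by auto

lemma AB_disj: "X \<in> A \<Longrightarrow> X \<notin> B"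
  using A_ne in_A_even in_B_odd by blast

lemma blk_eq: assumes "X \<in> A \<union> B" "i \<in> X" shows "blk (A \<union> B) i = X"
  unfolding blk_def
proof (rule the_equality)
  show "X \<in> A \<union> B \<and> i \<in> X" using assms by auto
  fix Y assume "Y \<in> A \<union> B \<and> i \<in> Y"
  then show "Y = X" using assms A_disj B_disj in_A_even in_B_odd by blast
qed

lemma blk_in: assumes "i < 4*m"
  shows "blk (A \<union> B) i \<in> (if even i then A else B) \<and> i \<in> blk (A \<union> B) i"
proof (cases "even i")
  case True
  then obtain X where "X \<in> A" "i \<in> X" using A_cov assms Ev_def by auto
  then show ?thesis using blk_eq True by auto
next
  case False
  then obtain X where "X \<in> B" "i \<in> X" using B_cov assms Od_def by auto
  then show ?thesis using blk_eq False by auto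
qed

lemma blk_iff: assumes "X \<in> A \<union> B" "i < 4*m" shows "blk (A \<union> B) i = X \<longleftrightarrow> i \<in> X"
  using blk_eq blk_in assms by (metis UnI1 UnI2)

lemma sc_lt: "e < 4*m \<Longrightarrow> sc e < 4*m" unfolding sc_def using m2 by auto
lemma pr_lt: "t < 4*m \<Longrightarrow> pr t < 4*m" unfolding pr_def using m2 by auto
lemma pr_sc: "e < 4*m \<Longrightarrow> pr (sc e) = e" unfolding sc_def pr_def using m2
  by (cases "e + 1 = 4*m") auto
lemma sc_pr: "t < 4*m \<Longrightarrow> sc (pr t) = t" unfolding sc_def pr_def using m2
  by auto
lemma bij_sc: "bij_betw sc {..<4*m} {..<4*m}"
  by (rule bij_betwI[where g=pr]) (auto simp: sc_lt pr_lt pr_sc sc_pr)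

lemma vsum_eq: assumes X: "X \<in> A \<union> B"
  shows "vsum (G_edges m) (G_ends m A B) f X = (\<Sum>t\<in>X. f t + f (pr t))"
proof -
  have Xs: "X \<subseteq> {..<4*m}" using X in_A_even in_B_odd by blast
  have "vsum (G_edges m) (G_ends m A B) f X =
     (\<Sum>e\<in>{..<4*m}. (if e \<in> X then f e else 0)) + (\<Sum>e\<in>{..<4*m}. (if sc e \<in> X then f e else 0))"
    unfolding vsum_def G_edges_def G_ends_def sum.distrib[symmetric]
    apply (rule sum.cong)
    using blk_iff[OF X] sc_lt by (auto simp: sc_def)
  also have "(\<Sum>e\<in>{..<4*m}. (if e \<in> X then f e else 0)) = (\<Sum>t\<in>X. f t)"
    using Xs by (simp add: sum.If_cases Int_absorb1 inf.absorb2)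
  also have "(\<Sum>e\<in>{..<4*m}. (if sc e \<in> X then f e else 0))
      = (\<Sum>e\<in>{..<4*m}. (\<lambda>t. if t \<in> X then f (pr t) else 0) (sc e))"
    by (rule sum.cong) (auto simp: pr_sc)
  also have "\<dots> = (\<Sum>t\<in>{..<4*m}. if t \<in> X then f (pr t) else 0)"
    by (rule sum.reindex_bij_betw[OF bij_sc])
  also have "\<dots> = (\<Sum>t\<in>X. f (pr t))"
    using Xs by (simp add: sum.If_cases Int_absorb1 inf.absorb2)
  finally show ?thesis by (simp add: sum.distrib)
qed

lemma Ev_img: "Ev = (\<lambda>k. 2*k) ` {..<2*m}"
  unfolding Ev_def by (auto simp: image_iff elim!: evenE)
lemma Od_img: "Od = (\<lambda>k. 2*k+1) ` {..<2*m}"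
  unfolding Od_def by (auto simp: image_iff elim!: oddE)
lemma card_Ev: "card Ev = 2*m" unfolding Ev_img by (subst card_image) (auto simp: inj_on_def)
lemma card_Od: "card Od = 2*m" unfolding Od_img by (subst card_image) (auto simp: inj_on_def)

lemma card_A: "card A = m"
proof -
  have "card Ev = sum card A"
    using partition_onD1[OF partA] partition_onD2[OF partA] card_Union_disjoint[of A] finEv A_sub
    by (metis finite_subset)
  also have "\<dots> = 2 * card A" using cardA2 by simp
  finally show ?thesis using card_Ev by simp
qed
lemma card_B: "card B = m"
proof -
  have "card Od = sum card B"
    using partition_onD1[OF partB] partition_onD2[OF partB] card_Union_disjoint[of B] finOd B_sub
    by (metis finite_subset)
  also have "\<dots> = 2 * card B" using cardB2 by simp
  finally show ?thesis using card_Od by simp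
qed

lemma sc_if: "t < 4*m \<Longrightarrow> sc t = (if t = 4*m - 1 then 0 else t + 1)"
  unfolding sc_def using m2 by (auto simp: mod_if)
lemma bij_pr_Ev: "bij_betw pr Ev Od"
  apply (rule bij_betwI[where g=sc])
  using m2 by (auto simp: Ev_def Od_def pr_def sc_if; presburger)+
lemma bij_pr_Od: "bij_betw pr Od Ev"
  apply (rule bij_betwI[where g=sc])
  using m2 by (auto simp: Ev_def Od_def pr_def sc_if; presburger)+

lemma total_A: "(\<Sum>X\<in>A. vsum (G_edges m) (G_ends m A B) f X) = sum f Ev + sum f Od"
proof -
  have "(\<Sum>X\<in>A. vsum (G_edges m) (G_ends m A B) f X) = (\<Sum>X\<in>A. \<Sum>t\<in>X. f t + f (pr t))"
    by (rule sum.cong) (auto simp: vsum_eq)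
  also have "\<dots> = (\<Sum>t\<in>Ev. f t + f (pr t))"
    using sum.Union_disjoint[of A "\<lambda>t. f t + f (pr t)"] partition_onD1[OF partA]
      disjointD[OF partition_onD2[OF partA]] finA A_sub finEv
    by (metis (no_types, lifting) comp_apply finite_subset)
  also have "\<dots> = sum f Ev + sum f Od"
    by (simp add: sum.distrib sum.reindex_bij_betw[OF bij_pr_Ev])
  finally show ?thesis .
qed
lemma total_B: "(\<Sum>X\<in>B. vsum (G_edges m) (G_ends m A B) f X) = sum f Ev + sum f Od"
proof -
  have "(\<Sum>X\<in>B. vsum (G_edges m) (G_ends m A B) f X) = (\<Sum>X\<in>B. \<Sum>t\<in>X. f t + f (pr t))"
    by (rule sum.cong) (auto simp: vsum_eq)
  also have "\<dots> = (\<Sum>t\<in>Od. f t + f (pr t))"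
    using sum.Union_disjoint[of B "\<lambda>t. f t + f (pr t)"] partition_onD1[OF partB]
      disjointD[OF partition_onD2[OF partB]] finB B_sub finOd
    by (metis (no_types, lifting) comp_apply finite_subset)
  also have "\<dots> = sum f Ev + sum f Od"
    by (simp add: sum.distrib sum.reindex_bij_betw[OF bij_pr_Od])
  finally show ?thesis .
qed

lemma sc_par: "i < 4*m \<Longrightarrow> even (sc i) \<longleftrightarrow> odd i"
  using m2 by (auto simp: sc_if; presburger)

lemma adj_sc: assumes "i < 4*m"
  shows "adjacent (G_edges m) (G_ends m A B) (blk (A \<union> B) i) (blk (A \<union> B) (sc i))"
    "blk (A \<union> B) i \<in> A \<union> B" "blk (A \<union> B) (sc i) \<in> A \<union> B"
proof -
  have b1: "blk (A \<union> B) i \<in> (if even i then A else B)" using blk_in assms by blast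
  have b2: "blk (A \<union> B) (sc i) \<in> (if even i then B else A)"
    using blk_in[OF sc_lt[OF assms]] sc_par[OF assms] by (auto split: if_splits)
  have ne: "blk (A \<union> B) i \<noteq> blk (A \<union> B) (sc i)" using b1 b2 AB_disj by (auto split: if_splits)
  show "adjacent (G_edges m) (G_ends m A B) (blk (A \<union> B) i) (blk (A \<union> B) (sc i))"
    unfolding adjacent_def using ne assms by (auto simp: G_edges_def G_ends_def sc_def)
  show "blk (A \<union> B) i \<in> A \<union> B" "blk (A \<union> B) (sc i) \<in> A \<union> B"
    using b1 b2 by (auto split: if_splits)
qed

lemma lower: assumes la: "local_antimagic (G_verts A B) (G_edges m) (G_ends m A B) f"
  shows "3 \<le> card (vsum (G_edges m) (G_ends m A B) f ` G_verts A B)"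
proof (rule ccontr)
  define vs where "vs = vsum (G_edges m) (G_ends m A B) f"
  define w where "w i = vs (blk (A \<union> B) i)" for i
  define I where "I = vs ` (A \<union> B)"
  assume "\<not> 3 \<le> card (vsum (G_edges m) (G_ends m A B) f ` G_verts A B)"
  then have c2: "card I \<le> 2" unfolding I_def vs_def G_verts_def by simp
  have finI: "finite I" unfolding I_def using finA finB by simp
  have la2: "\<forall>x\<in>A \<union> B. \<forall>y\<in>A \<union> B. adjacent (G_edges m) (G_ends m A B) x y \<longrightarrow> vs x \<noteq> vs y"
    using la unfolding local_antimagic_def G_verts_def vs_def by blast
  have step: "w i \<noteq> w (sc i)" if "i < 4*m" for i
    unfolding w_def using la2 adj_sc[OF that] by blast
  have winI: "w i \<in> I" if "i < 4*m" for i
    using adj_sc[OF that] unfolding w_def I_def by blast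
  have sc0: "sc 0 = 1" using m2 by (simp add: sc_def)
  have w01: "w 0 \<noteq> w 1" using step[of 0] m2 sc0 by simp
  have two: "z = w 0 \<or> z = w 1" if "z \<in> I" for z
  proof (rule ccontr)
    assume "\<not> ?thesis"
    then have s: "{w 0, w 1, z} \<subseteq> I" and c: "card {w 0, w 1, z} = 3"
      using that winI[of 0] winI[of 1] m2 w01 by auto
    have "card {w 0, w 1, z} \<le> card I" by (rule card_mono[OF finI s])
    then show False using c c2 by linarith
  qed
  have alt: "i < 4*m \<Longrightarrow> w i = (if even i then w 0 else w 1)" for i
  proof (induction i)
    case 0 then show ?case by simp
  next
    case (Suc i)
    then have "sc i = Suc i" by (simp add: sc_if)
    then have "w (Suc i) \<noteq> w i" using step[of i] Suc by simp
    moreover have "w (Suc i) = w 0 \<or> w (Suc i) = w 1" using two winI Suc by blast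
    ultimately show ?case using Suc by auto
  qed
  have vA: "vs X = w 0" if X: "X \<in> A" for X
  proof -
    obtain i where "i \<in> X" using A_ne[OF X] by blast
    then show ?thesis using alt[of i] blk_eq[of X i] X in_A_even unfolding w_def by auto
  qed
  have vB: "vs X = w 1" if X: "X \<in> B" for X
  proof -
    obtain i where "i \<in> X" using B_ne[OF X] by blast
    then show ?thesis using alt[of i] blk_eq[of X i] X in_B_odd unfolding w_def by auto
  qed
  have "m * w 0 = m * w 1"
    using total_A[of f] total_B[of f] vA vB card_A card_B unfolding vs_def by simp
  then show False using m2 w01 by simp
qed

definition f0 :: "nat \<Rightarrow> nat" where
  "f0 i = (if even i then i div 2 + 1 else if i = 4*m - 1 then 4*m else 4*m - 1 - i div 2)"

lemma f0_range: "i < 4*m \<Longrightarrow> f0 i \<in> {1..4*m}"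
  unfolding f0_def by auto

lemma f0_inj: "inj_on f0 {0..<4*m}"
proof (rule inj_onI)
  fix x y assume x: "x \<in> {0..<4*m}" and y: "y \<in> {0..<4*m}" and e: "f0 x = f0 y"
  have xl: "x < 4*m" and yl: "y < 4*m" using x y by auto
  have ev: "f0 z \<le> 2*m" if "even z" "z < 4*m" for z using that unfolding f0_def by auto
  have od: "2*m < f0 z" if "odd z" "z < 4*m" for z
  proof (cases "z = 4*m-1")
    case True then show ?thesis using that m2 unfolding f0_def by auto
  next
    case False
    then have "z div 2 \<le> 2*m - 2" using that m2 by presburger
    then show ?thesis using that m2 False unfolding f0_def by auto
  qed
  show "x = y"
  proof (cases "even x")
    case True
    then have "even y" using od[OF _ yl] ev[OF True xl] e by (metis not_less)
    then show ?thesis using True e unfolding f0_def by simp presburger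
  next
    case False
    then have oy: "odd y" using ev[OF _ yl] od[OF False xl] e by (metis not_less)
    show ?thesis
    proof (cases "x = 4*m-1 \<or> y = 4*m-1")
      case True
      then show ?thesis using False oy e xl yl unfolding f0_def by (auto split: if_splits)
    next
      case c: False
      then have "x div 2 = y div 2" using False oy e xl yl unfolding f0_def by auto
      then show ?thesis using False oy by presburger
    qed
  qed
qed

lemma f0_bij: "bij_betw f0 (G_edges m) {1..card (G_edges m)}"
proof -
  have "f0 ` {0..<4*m} \<subseteq> {1..4*m}" using f0_range by auto
  moreover have "card (f0 ` {0..<4*m}) = card {1..4*m}" using card_image[OF f0_inj] by simp
  ultimately have "f0 ` {0..<4*m} = {1..4*m}" by (simp add: card_subset_eq)
  then show ?thesis unfolding G_edges_def bij_betw_def using f0_inj by simp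
qed

lemma s_val: "t < 4*m \<Longrightarrow> f0 t + f0 (pr t) = (if even t then 4*m+1 else if t = 4*m-1 then 6*m else 4*m)"
  using m2 unfolding f0_def pr_def by (auto; presburger)

lemma vs_A: "X \<in> A \<Longrightarrow> vsum (G_edges m) (G_ends m A B) f0 X = 8*m+2"
proof -
  assume X: "X \<in> A"
  then obtain i j where ij: "X = {i,j}" "i \<noteq> j" using cardA2 card_2_iff by metis
  then have "even i" "even j" "i < 4*m" "j < 4*m" using in_A_even X by auto
  then show ?thesis using vsum_eq[of X f0] X ij s_val by simp
qed

lemma vs_B: "X \<in> B \<Longrightarrow> vsum (G_edges m) (G_ends m A B) f0 X = (if 4*m-1 \<in> X then 10*m else 8*m)"
proof -
  assume X: "X \<in> B"
  then obtain i j where ij: "X = {i,j}" "i \<noteq> j" using cardB2 card_2_iff by metis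
  then have "odd i" "odd j" "i < 4*m" "j < 4*m" using in_B_odd X by auto
  then show ?thesis using vsum_eq[of X f0] X ij s_val by auto
qed

lemma f0_la: "local_antimagic (G_verts A B) (G_edges m) (G_ends m A B) f0"
  unfolding local_antimagic_def
proof (intro conjI ballI impI)
  show "bij_betw f0 (G_edges m) {1..card (G_edges m)}" by (rule f0_bij)
  fix x y assume x: "x \<in> G_verts A B" and y: "y \<in> G_verts A B"
    and adj: "adjacent (G_edges m) (G_ends m A B) x y"
  obtain e where e0: "e \<in> G_edges m" and e2: "G_ends m A B e = (x, y) \<or> G_ends m A B e = (y, x)"
    using adj unfolding adjacent_def by blast
  have e: "e < 4*m" "G_ends m A B e = (x, y) \<or> G_ends m A B e = (y, x)"
    using e0 e2 unfolding G_edges_def by auto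
  have b1: "blk (A \<union> B) e \<in> (if even e then A else B)" using blk_in e by blast
  have b2: "blk (A \<union> B) (sc e) \<in> (if even e then B else A)"
    using blk_in[OF sc_lt[OF e(1)]] sc_par[OF e(1)] by (auto split: if_splits)
  have "(x \<in> A \<and> y \<in> B) \<or> (x \<in> B \<and> y \<in> A)"
    using e(2) b1 b2 unfolding G_ends_def sc_def by (auto split: if_splits)
  then show "vsum (G_edges m) (G_ends m A B) f0 x \<noteq> vsum (G_edges m) (G_ends m A B) f0 y"
  proof
    assume "(x \<in> A \<and> y \<in> B)"
    then show ?thesis using vs_A vs_B m2 by (simp split: if_splits)
  next
    assume "(x \<in> B \<and> y \<in> A)"
    then show ?thesis using vs_A vs_B m2 by (simp split: if_splits)
  qed
qed

lemma f0_img: "vsum (G_edges m) (G_ends m A B) f0 ` G_verts A B = {8*m+2, 10*m, 8*m}"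
proof
  show "vsum (G_edges m) (G_ends m A B) f0 ` G_verts A B \<subseteq> {8*m+2, 10*m, 8*m}"
    unfolding G_verts_def using vs_A vs_B by auto
  obtain X where X: "X \<in> A" using card_A m2 by fastforce
  have l: "4*m - 1 < 4*m" "odd (4*m - 1)" using m2 by auto
  obtain Y where Y: "Y \<in> B" "4*m-1 \<in> Y" using B_cov[of "4*m-1"] l Od_def by auto
  obtain Z where Z: "Z \<in> B" "Z \<noteq> Y"
  proof -
    have "card B \<ge> 2" using card_B m2 by simp
    then have "B \<noteq> {Y}" by auto
    then show ?thesis using that Y(1) by blast
  qed
  have "4*m-1 \<notin> Z" using B_disj Y Z by blast
  then show "{8*m+2, 10*m, 8*m} \<subseteq> vsum (G_edges m) (G_ends m A B) f0 ` G_verts A B"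
  proof -
    have "vsum (G_edges m) (G_ends m A B) f0 X \<in> vsum (G_edges m) (G_ends m A B) f0 ` G_verts A B"
      "vsum (G_edges m) (G_ends m A B) f0 Y \<in> vsum (G_edges m) (G_ends m A B) f0 ` G_verts A B"
      "vsum (G_edges m) (G_ends m A B) f0 Z \<in> vsum (G_edges m) (G_ends m A B) f0 ` G_verts A B"
      using X Y Z unfolding G_verts_def by blast+
    moreover have "vsum (G_edges m) (G_ends m A B) f0 X = 8*m+2"
      "vsum (G_edges m) (G_ends m A B) f0 Y = 10*m" "vsum (G_edges m) (G_ends m A B) f0 Z = 8*m"
      using vs_A[OF X] vs_B[OF Y(1)] vs_B[OF Z(1)] Y(2) \<open>4*m-1 \<notin> Z\<close> by auto
    ultimately show ?thesis by auto
  qed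
qed

lemma chi: "chi_la (G_verts A B) (G_edges m) (G_ends m A B) = 3"
  unfolding chi_la_def
proof (rule Least_equality)
  have "card {8*m+2, 10*m, 8*m} = 3" using m2 by simp
  then show "\<exists>f. local_antimagic (G_verts A B) (G_edges m) (G_ends m A B) f \<and>
      card (vsum (G_edges m) (G_ends m A B) f ` G_verts A B) = 3"
    using f0_la f0_img by metis
next
  fix k assume "\<exists>f. local_antimagic (G_verts A B) (G_edges m) (G_ends m A B) f \<and>
      card (vsum (G_edges m) (G_ends m A B) f ` G_verts A B) = k"
  then show "3 \<le> k" using lower by blast
qed

end

theorem mainTheorem9:
  fixes m :: nat and A B :: "nat set set"
  assumes "m \<ge> 2"
    and "pair_partition A {i. i < 4*m \<and> even i}"
    and "pair_partition B {i. i < 4*m \<and> odd i}"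
  shows "chi_la (G_verts A B) (G_edges m) (G_ends m A B) = 3"
proof -
  interpret G9 m A B using assms by unfold_locales
  show ?thesis by (rule chi)
qed

end
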